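(* Let $x=\sum_{n\in F}\alpha_ne_n$ be an extreme point of $B_J$ and let $\{I_n\}_{n\in F}$ be a family of intervals of $\mathbb N$. If $\bigcup_{n\in\mathrm{supp}(x)}I_n$ is not an interval of $\mathbb N$, then $x^*=\sum_{n\in F}\alpha_nI_n^*$ is not an extreme point of $B_{J^*}$.
   Context: For a real sequence $x=(x(n))_{n\in\mathbb N}$ let $\|x\|_J=\sup\bigl(\sum_{i=1}^n|\sum_{k\in I_i}x(k)|^2\bigr)^{1/2}$ over all $n$ and all families of pairwise disjoint intervals $I_1,\dots,I_n$ of $\mathbb N$ (intervals: nonempty sets of consecutive positive integers, possibly infinite). $J=\{x:\|x\|_J<\infty\}$ with unit vector basis $(e_n)$ and closed unit ball $B_J$; $J^*$ is its dual with closed unit ball $B_{J^*}$. $\mathrm{supp}(x)=\{n:x(n)\ne0\}$. For an interval $I$, $I^*\in J^*$ is $I^*(x)=\sum_{n\in I}x(n)$. A family of intervals $\{I_i\}_{i\in F}$: $F=\{1,\dots,k\}$ or $F=\mathbb N$, each $I_i$ an interval, $\max I_i<\min I_{i+1}$ whenever $i+1\in F$; $\sum_{i\in F}\alpha_iI_i^*$ denotes the functional $x\mapsto\sum_{i\in F}\alpha_iI_i^*(x)$ (here $\sum\alpha_i^2=1$, so this is a functional of norm at most $1$). *)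

theory Defs
  imports "HOL-Analysis.Analysis"
begin

text \<open>James space J. The index set N is modelled by the type nat (first index 0).\<close>

definition nat_interval :: "nat set \<Rightarrow> bool" where
  "nat_interval I \<longleftrightarrow> I \<noteq> {} \<and> (\<forall>a\<in>I. \<forall>c\<in>I. \<forall>b. a \<le> b \<and> b \<le> c \<longrightarrow> b \<in> I)"

definition isum :: "(nat \<Rightarrow> real) \<Rightarrow> nat set \<Rightarrow> real" where
  "isum x I = (if finite I then (\<Sum>k\<in>I. x k) else lim (\<lambda>n. \<Sum>k\<in>I \<inter> {..<n}. x k))"

definition jnorm :: "(nat \<Rightarrow> real) \<Rightarrow> ereal" where
  "jnorm x = (SUP S \<in> {S. finite S \<and> (\<forall>I\<in>S. nat_interval I) \<and> disjoint S}.
                 ereal (sqrt (\<Sum>I\<in>S. (isum x I)\<^sup>2)))"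

definition James :: "(nat \<Rightarrow> real) set" where
  "James = {x. jnorm x < \<infinity>}"

definition ball_J :: "(nat \<Rightarrow> real) set" where
  "ball_J = {x. jnorm x \<le> 1}"

text \<open>Functionals are represented as functions on all sequences which vanish off J,
  so that equality of functionals is equality of these functions.\<close>
definition ball_Jdual :: "((nat \<Rightarrow> real) \<Rightarrow> real) set" where
  "ball_Jdual = {f. (\<forall>x. x \<notin> James \<longrightarrow> f x = 0)
      \<and> (\<forall>x\<in>James. \<forall>y\<in>James. f (\<lambda>n. x n + y n) = f x + f y)
      \<and> (\<forall>c. \<forall>x\<in>James. f (\<lambda>n. c * x n) = c * f x)
      \<and> (\<forall>x\<in>James. ereal \<bar>f x\<bar> \<le> jnorm x)}"

definition extreme_pt :: "('a \<Rightarrow> real) set \<Rightarrow> ('a \<Rightarrow> real) \<Rightarrow> bool" where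
  "extreme_pt B x \<longleftrightarrow> x \<in> B \<and>
     (\<forall>y\<in>B. \<forall>z\<in>B. \<forall>t::real. 0 < t \<and> t < 1 \<and> x = (\<lambda>n. t * y n + (1 - t) * z n) \<longrightarrow> y = z)"

definition interval_functional ::
    "nat set \<Rightarrow> (nat \<Rightarrow> real) \<Rightarrow> (nat \<Rightarrow> nat set) \<Rightarrow> (nat \<Rightarrow> real) \<Rightarrow> real" where
  "interval_functional F \<alpha> I y =
     (if y \<in> James then
        (if finite F then (\<Sum>n\<in>F. \<alpha> n * isum y (I n)) else (\<Sum>n. \<alpha> n * isum y (I n)))
      else 0)"

definition supp :: "(nat \<Rightarrow> real) \<Rightarrow> nat set" where
  "supp x = {n. x n \<noteq> 0}"

end

theory Submission
  imports Defs "HOL-Analysis.L2_Norm"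
begin

abbreviation fam :: "nat set set \<Rightarrow> bool" where
  "fam S \<equiv> finite S \<and> (\<forall>I\<in>S. nat_interval I) \<and> disjoint S"

lemma jnorm_upper:
  assumes "fam S"
  shows "ereal (sqrt (\<Sum>I\<in>S. (isum y I)\<^sup>2)) \<le> jnorm y"
  unfolding jnorm_def using assms by (intro SUP_upper) auto

lemma jnorm_least:
  assumes "\<And>S. fam S \<Longrightarrow> ereal (sqrt (\<Sum>I\<in>S. (isum y I)\<^sup>2)) \<le> B"
  shows "jnorm y \<le> B"
  unfolding jnorm_def using assms by (intro SUP_least) auto

lemma jnorm_nonneg: "0 \<le> jnorm y"
  using jnorm_upper[of "{}" y] by (simp add: zero_ereal_def)

lemma lim_ev_const:
  assumes "eventually (\<lambda>N. X N = c) sequentially"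
  shows "lim X = c"
proof -
  have "X \<longlonglongrightarrow> c" using assms tendsto_eventually by blast
  then show ?thesis by (rule limI)
qed

lemma lim_ev_cong:
  assumes "eventually (\<lambda>N. X N = Y N) sequentially"
  shows "lim X = lim Y"
proof -
  have "\<And>L. (X \<longlonglongrightarrow> L) = (Y \<longlonglongrightarrow> L)"
    using assms by (intro tendsto_cong) auto
  then show ?thesis unfolding lim_def by simp
qed

lemma finite_sum_trunc:
  assumes "finite A"
  shows "eventually (\<lambda>N. A \<inter> {..<N} = A) sequentially"
proof -
  obtain M where "A \<subseteq> {..<M}" using assms finite_nat_bounded by blast
  then have "\<forall>N\<ge>M. A \<inter> {..<N} = A" by auto
  then show ?thesis unfolding eventually_sequentially by blast
qed

lemma isum_cong_ev:
  assumes "finite A \<longleftrightarrow> finite B"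
    and "eventually (\<lambda>N. (\<Sum>k\<in>A \<inter> {..<N}. f k) = (\<Sum>k\<in>B \<inter> {..<N}. g k)) sequentially"
  shows "isum f A = isum g B"
proof (cases "finite A")
  case True
  then have fB: "finite B" using assms by simp
  have "eventually (\<lambda>N. A \<inter> {..<N} = A \<and> B \<inter> {..<N} = B \<and>
     (\<Sum>k\<in>A \<inter> {..<N}. f k) = (\<Sum>k\<in>B \<inter> {..<N}. g k)) sequentially"
    using finite_sum_trunc[OF True] finite_sum_trunc[OF fB] assms(2)
    by (auto intro: eventually_conj)
  then obtain N where h1: "A \<inter> {..<N} = A" and h2: "B \<inter> {..<N} = B" and 
     h3: "(\<Sum>k\<in>A \<inter> {..<N}. f k) = (\<Sum>k\<in>B \<inter> {..<N}. g k)"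
    unfolding eventually_sequentially by blast
  show ?thesis using True fB h3 unfolding isum_def h1 h2 by simp
next
  case False
  then show ?thesis using assms unfolding isum_def by (simp add: lim_ev_cong)
qed

lemma isum_supp:
  assumes "finite D" and "\<And>k. k \<notin> D \<Longrightarrow> w k = 0"
  shows "isum w K = (\<Sum>k\<in>K \<inter> D. w k)"
proof -
  have eq: "(\<Sum>k\<in>K \<inter> E. w k) = (\<Sum>k\<in>K \<inter> D. w k)" if "finite E" "D \<subseteq> E" for E
    using that assms by (intro sum.mono_neutral_right) auto
  show ?thesis
  proof (cases "finite K")
    case True
    have "(\<Sum>k\<in>K. w k) = (\<Sum>k\<in>K \<inter> D. w k)"
      using True assms(2) by (intro sum.mono_neutral_right) auto
    then show ?thesis using True unfolding isum_def by simp
  next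
    case False
    obtain M where "D \<subseteq> {..<M}" using assms finite_nat_bounded by blast
    then have M: "\<forall>a\<in>D. a < M" by auto
    have "eventually (\<lambda>N. (\<Sum>k\<in>K \<inter> {..<N}. w k) = (\<Sum>k\<in>K \<inter> D. w k)) sequentially"
    proof -
      have "(\<Sum>k\<in>K \<inter> {..<N}. w k) = (\<Sum>k\<in>K \<inter> D. w k)" if "N \<ge> M" for N
      proof -
        have "K \<inter> {..<N} \<inter> D = K \<inter> D" using M that by auto
        then have "(\<Sum>k\<in>K \<inter> {..<N}. w k) = (\<Sum>k\<in>K \<inter> {..<N} \<inter> D. w k)"
          using assms(2) by (intro sum.mono_neutral_right) auto
        then show ?thesis using \<open>K \<inter> {..<N} \<inter> D = K \<inter> D\<close> by simp
      qed
      then show ?thesis unfolding eventually_sequentially by blast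
    qed
    then show ?thesis using False unfolding isum_def by (simp add: lim_ev_const)
  qed
qed

lemma nat_interval_atLeastLessThan: "p < q \<Longrightarrow> nat_interval {p..<q}"
  unfolding nat_interval_def by auto

lemma interval_mem:
  assumes "nat_interval K" "a \<in> K" "c \<in> K" "a \<le> b" "b \<le> c"
  shows "b \<in> K"
  using assms unfolding nat_interval_def by blast

lemma nat_interval_infinite:
  assumes "nat_interval K" "infinite K"
  obtains a where "K = {a..}"
proof -
  have ne: "K \<noteq> {}" using assms unfolding nat_interval_def by auto
  define a where "a = (LEAST k. k \<in> K)"
  have "\<exists>k. k \<in> K" using ne by blast
  then have aK: "a \<in> K" unfolding a_def by (rule LeastI_ex)
  have amin: "\<forall>k\<in>K. a \<le> k" unfolding a_def by (simp add: Least_le)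
  have "K = {a..}"
  proof
    show "K \<subseteq> {a..}" using amin by auto
    show "{a..} \<subseteq> K"
    proof
      fix k assume "k \<in> {a..}"
      have "\<forall>m. \<exists>n\<ge>m. n \<in> K" using assms(2) unfolding infinite_nat_iff_unbounded_le .
      then obtain c where "c \<in> K" "c \<ge> k" by blast
      then show "k \<in> K" using interval_mem[OF assms(1) aK \<open>c \<in> K\<close>] \<open>k \<in> {a..}\<close> by simp
    qed
  qed
  then show ?thesis using that by blast
qed

lemma James_finite_norm:
  assumes "y \<in> James"
  obtains M where "jnorm y = ereal M" "M \<ge> 0"
proof -
  have "jnorm y \<noteq> \<infinity>" "jnorm y \<noteq> -\<infinity>" using assms jnorm_nonneg[of y] unfolding James_def by auto
  then obtain M where "jnorm y = ereal M" by (cases "jnorm y") auto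
  moreover then have "M \<ge> 0" using jnorm_nonneg[of y] by simp
  ultimately show ?thesis using that by blast
qed

lemma James_fam_bound:
  assumes "jnorm y = ereal M" "fam S"
  shows "(\<Sum>I\<in>S. (isum y I)\<^sup>2) \<le> M\<^sup>2"
proof -
  have "sqrt (\<Sum>I\<in>S. (isum y I)\<^sup>2) \<le> M" using jnorm_upper[OF assms(2), of y] assms(1) by simp
  moreover have "0 \<le> (\<Sum>I\<in>S. (isum y I)\<^sup>2)" by (simp add: sum_nonneg)
  ultimately show ?thesis using power_mono[of "sqrt (\<Sum>I\<in>S. (isum y I)\<^sup>2)" M 2] by simp
qed

lemma James_summable:
  assumes "y \<in> James"
  shows "summable y"
proof (rule ccontr)
  assume ns: "\<not> summable y"
  obtain M where M: "jnorm y = ereal M" "M \<ge> 0" using James_finite_norm[OF assms] by blast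
  from ns obtain e where e: "e > 0" and ev: "\<forall>N. \<exists>m\<ge>N. \<exists>n. \<not> norm (sum y {m..<n}) < e"
    unfolding summable_Cauchy by blast
  have "\<forall>N. \<exists>mn. N \<le> fst mn \<and> e \<le> \<bar>sum y {fst mn..<snd mn}\<bar>"
  proof
    fix N
    obtain m n where "m \<ge> N" "\<not> norm (sum y {m..<n}) < e" using ev by blast
    then show "\<exists>mn. N \<le> fst mn \<and> e \<le> \<bar>sum y {fst mn..<snd mn}\<bar>"
      by (intro exI[of _ "(m,n)"]) auto
  qed
  from choice[OF this] obtain g where g: "\<And>N. N \<le> fst (g N) \<and> e \<le> \<bar>sum y {fst (g N)..<snd (g N)}\<bar>"
    by blast
  have lt: "fst (g N) < snd (g N)" for N
    using g[of N] e by (cases "fst (g N) < snd (g N)") auto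
  define h where "h = rec_nat 0 (\<lambda>_ k. snd (g k))"
  have h0: "h 0 = 0" and hS: "h (Suc i) = snd (g (h i))" for i unfolding h_def by auto
  define J where "J i = {fst (g (h i))..<snd (g (h i))}" for i
  have Jsub: "J i \<subseteq> {h i..<h (Suc i)}" for i using g[of "h i"] unfolding J_def hS by auto
  have hmono: "h (Suc i) \<le> h j" if "i < j" for i j
    using that
  proof (induction j)
    case 0 then show ?case by simp
  next
    case (Suc j)
    have "h j \<le> h (Suc j)" using lt[of "h j"] g[of "h j"] hS[of j] by simp
    then show ?case using Suc by (cases "i = j") auto
  qed
  have Jdisj: "J i \<inter> J j = {}" if "i \<noteq> j" for i j
  proof -
    have "i < j \<or> j < i" using that by auto
    then show ?thesis
    proof
      assume "i < j"
      then have "\<forall>a\<in>J i. \<forall>b\<in>J j. a < b" using Jsub[of i] Jsub[of j] hmono[of i j]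
        by (meson atLeastLessThan_iff less_le_trans subsetD)
      then show ?thesis by blast
    next
      assume "j < i"
      then have "\<forall>a\<in>J j. \<forall>b\<in>J i. a < b" using Jsub[of i] Jsub[of j] hmono[of j i]
        by (meson atLeastLessThan_iff less_le_trans subsetD)
      then show ?thesis by blast
    qed
  qed
  have Jne: "J i \<noteq> {}" for i unfolding J_def using lt by auto
  have Jinj: "inj J"
  proof (rule injI, rule ccontr)
    fix i j assume "J i = J j" "i \<noteq> j"
    then show False using Jdisj[of i j] Jne[of i] by simp
  qed
  have bound: "real k * e\<^sup>2 \<le> M\<^sup>2" for k
  proof -
    have fam: "fam (J ` {..<k})"
    proof (intro conjI)
      show "finite (J ` {..<k})" by simp
      show "\<forall>I\<in>J ` {..<k}. nat_interval I" unfolding J_def using lt nat_interval_atLeastLessThan by auto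
      show "disjoint (J ` {..<k})"
      proof (rule pairwiseI)
        fix A B assume "A \<in> J ` {..<k}" "B \<in> J ` {..<k}" "A \<noteq> B"
        then obtain i j where "A = J i" "B = J j" "i \<noteq> j" by blast
        then show "disjnt A B" using Jdisj[of i j] unfolding disjnt_def by simp
      qed
    qed
    have "(\<Sum>I\<in>J ` {..<k}. (isum y I)\<^sup>2) = (\<Sum>i<k. (isum y (J i))\<^sup>2)"
      using sum.reindex[OF inj_on_subset[OF Jinj subset_UNIV], of "\<lambda>I. (isum y I)\<^sup>2" "{..<k}"] by simp
    also have "\<dots> \<ge> (\<Sum>i<k. e\<^sup>2)"
    proof (intro sum_mono)
      fix i
      have "isum y (J i) = sum y {fst (g (h i))..<snd (g (h i))}" unfolding isum_def J_def by simp
      then have "e \<le> \<bar>isum y (J i)\<bar>" using g by simp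
      then show "e\<^sup>2 \<le> (isum y (J i))\<^sup>2" using e power_mono[of e "\<bar>isum y (J i)\<bar>" 2] by simp
    qed
    finally show ?thesis using James_fam_bound[OF M(1) fam] by simp
  qed
  obtain k where "real k > M\<^sup>2 / e\<^sup>2" using reals_Archimedean2 by blast
  then have "real k * e\<^sup>2 > M\<^sup>2" using e by (simp add: field_simps)
  then show False using bound[of k] by simp
qed

lemma tail_eq: "{a..} \<inter> {..<N} = {a..<N}" by auto

lemma conv_tail:
  fixes y :: "nat \<Rightarrow> real"
  assumes "summable y"
  shows "convergent (\<lambda>N. \<Sum>k\<in>{a..} \<inter> {..<N}. y k)"
proof -
  have lim: "(\<lambda>N. (\<Sum>k<N. y k) - (\<Sum>k<a. y k)) \<longlonglongrightarrow> suminf y - (\<Sum>k<a. y k)"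
    using summable_LIMSEQ[OF assms] by (intro tendsto_diff) auto
  have eq: "(\<Sum>k<N. y k) - (\<Sum>k<a. y k) = (\<Sum>k\<in>{a..} \<inter> {..<N}. y k)" if "a \<le> N" for N
  proof -
    have u: "{..<N} = {..<a} \<union> {a..<N}" using that by auto
    have "(\<Sum>k\<in>{..<a} \<union> {a..<N}. y k) = (\<Sum>k<a. y k) + (\<Sum>k\<in>{a..<N}. y k)"
      by (rule sum.union_disjoint) auto
    then have s: "(\<Sum>k<N. y k) = (\<Sum>k<a. y k) + (\<Sum>k\<in>{a..<N}. y k)" unfolding u .
    show ?thesis unfolding tail_eq using s by simp
  qed
  have ev: "eventually (\<lambda>N. (\<Sum>k<N. y k) - (\<Sum>k<a. y k) = (\<Sum>k\<in>{a..} \<inter> {..<N}. y k)) sequentially"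
    unfolding eventually_sequentially using eq by blast
  have "(\<lambda>N. \<Sum>k\<in>{a..} \<inter> {..<N}. y k) \<longlonglongrightarrow> suminf y - (\<Sum>k<a. y k)"
    using lim[unfolded tendsto_cong[OF ev]] .
  then show ?thesis unfolding convergent_def by blast
qed

lemma isum_add:
  assumes "summable y" "summable z" "nat_interval K"
  shows "isum (\<lambda>n. y n + z n) K = isum y K + isum z K"
proof (cases "finite K")
  case True
  then show ?thesis unfolding isum_def by (simp add: sum.distrib)
next
  case False
  then obtain a where K: "K = {a..}" using nat_interval_infinite assms(3) by blast
  have cy: "convergent (\<lambda>N. \<Sum>k\<in>K \<inter> {..<N}. y k)" and cz: "convergent (\<lambda>N. \<Sum>k\<in>K \<inter> {..<N}. z k)"
    unfolding K using conv_tail assms by auto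
  have "(\<lambda>N. (\<Sum>k\<in>K \<inter> {..<N}. y k) + (\<Sum>k\<in>K \<inter> {..<N}. z k)) \<longlonglongrightarrow>
      lim (\<lambda>N. \<Sum>k\<in>K \<inter> {..<N}. y k) + lim (\<lambda>N. \<Sum>k\<in>K \<inter> {..<N}. z k)"
    using cy cz by (intro tendsto_add) (auto simp: convergent_LIMSEQ_iff)
  then have "lim (\<lambda>N. \<Sum>k\<in>K \<inter> {..<N}. y k + z k) =
      lim (\<lambda>N. \<Sum>k\<in>K \<inter> {..<N}. y k) + lim (\<lambda>N. \<Sum>k\<in>K \<inter> {..<N}. z k)"
    by (simp add: sum.distrib limI)
  then show ?thesis using False unfolding isum_def by simp
qed

lemma isum_scale:
  assumes "summable y" "nat_interval K"
  shows "isum (\<lambda>n. c * y n) K = c * isum y K"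
proof (cases "finite K")
  case True
  then show ?thesis unfolding isum_def by (simp add: sum_distrib_left)
next
  case False
  then obtain a where K: "K = {a..}" using nat_interval_infinite assms(2) by blast
  have cy: "convergent (\<lambda>N. \<Sum>k\<in>K \<inter> {..<N}. y k)"
    unfolding K using conv_tail assms by auto
  have "(\<lambda>N. c * (\<Sum>k\<in>K \<inter> {..<N}. y k)) \<longlonglongrightarrow> c * lim (\<lambda>N. \<Sum>k\<in>K \<inter> {..<N}. y k)"
    using cy by (intro tendsto_mult_left) (auto simp: convergent_LIMSEQ_iff)
  then have "lim (\<lambda>N. \<Sum>k\<in>K \<inter> {..<N}. c * y k) = c * lim (\<lambda>N. \<Sum>k\<in>K \<inter> {..<N}. y k)"
    by (simp add: sum_distrib_left limI)
  then show ?thesis using False unfolding isum_def by simp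
qed

lemma James_add:
  assumes "y \<in> James" "z \<in> James"
  shows "(\<lambda>n. y n + z n) \<in> James"
proof -
  obtain My where My: "jnorm y = ereal My" "My \<ge> 0" using James_finite_norm[OF assms(1)] by blast
  obtain Mz where Mz: "jnorm z = ereal Mz" "Mz \<ge> 0" using James_finite_norm[OF assms(2)] by blast
  have sy: "summable y" and sz: "summable z" using assms James_summable by auto
  have "jnorm (\<lambda>n. y n + z n) \<le> ereal (My + Mz)"
  proof (rule jnorm_least)
    fix S assume S: "fam S"
    have "sqrt (\<Sum>I\<in>S. (isum (\<lambda>n. y n + z n) I)\<^sup>2) = L2_set (\<lambda>I. isum y I + isum z I) S"
      unfolding L2_set_def using S isum_add[OF sy sz] by simp
    also have "\<dots> \<le> L2_set (isum y) S + L2_set (isum z) S" by (rule L2_set_triangle_ineq)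
    also have "\<dots> \<le> My + Mz"
      using jnorm_upper[OF S, of y] jnorm_upper[OF S, of z] My Mz unfolding L2_set_def
      by (intro add_mono) auto
    finally show "ereal (sqrt (\<Sum>I\<in>S. (isum (\<lambda>n. y n + z n) I)\<^sup>2)) \<le> ereal (My + Mz)" by simp
  qed
  then show ?thesis unfolding James_def using le_less_trans[of _ "ereal (My + Mz)" \<infinity>] by simp
qed

lemma James_scale:
  assumes "y \<in> James"
  shows "(\<lambda>n. c * y n) \<in> James"
proof -
  obtain My where My: "jnorm y = ereal My" "My \<ge> 0" using James_finite_norm[OF assms(1)] by blast
  have sy: "summable y" using assms James_summable by auto
  have "jnorm (\<lambda>n. c * y n) \<le> ereal (\<bar>c\<bar> * My)"
  proof (rule jnorm_least)
    fix S assume S: "fam S"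
    have "sqrt (\<Sum>I\<in>S. (isum (\<lambda>n. c * y n) I)\<^sup>2) = sqrt (c\<^sup>2 * (\<Sum>I\<in>S. (isum y I)\<^sup>2))"
      using S isum_scale[OF sy] by (simp add: power_mult_distrib sum_distrib_left)
    also have "\<dots> = \<bar>c\<bar> * sqrt (\<Sum>I\<in>S. (isum y I)\<^sup>2)" by (simp add: real_sqrt_mult)
    also have "\<dots> \<le> \<bar>c\<bar> * My"
      using jnorm_upper[OF S, of y] My by (intro mult_left_mono) auto
    finally show "ereal (sqrt (\<Sum>I\<in>S. (isum (\<lambda>n. c * y n) I)\<^sup>2)) \<le> ereal (\<bar>c\<bar> * My)" by simp
  qed
  then show ?thesis unfolding James_def using le_less_trans[of _ "ereal (\<bar>c\<bar> * My)" \<infinity>] by simp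
qed

definition collapse :: "nat \<Rightarrow> nat \<Rightarrow> nat \<Rightarrow> (nat \<Rightarrow> real) \<Rightarrow> nat \<Rightarrow> real" where
  "collapse a b p y = (\<lambda>k. if k = p then (\<Sum>j\<in>{a..b}. y j) else if a \<le> k \<and> k \<le> b then 0 else y k)"

definition cphi :: "nat \<Rightarrow> nat \<Rightarrow> nat \<Rightarrow> nat set \<Rightarrow> nat set" where
  "cphi a b p K = (if p \<in> K then K \<union> {a..b} else K - {a..b})"

lemma nat_intervalI:
  assumes "K \<noteq> {}" "\<And>x z w. x \<in> K \<Longrightarrow> w \<in> K \<Longrightarrow> x \<le> z \<Longrightarrow> z \<le> w \<Longrightarrow> z \<in> K"
  shows "nat_interval K"
  using assms unfolding nat_interval_def by blast

lemma collapse_isum: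
  assumes "a \<le> p" "p \<le> b"
  shows "isum (collapse a b p y) K = isum y (cphi a b p K)"
proof (rule isum_cong_ev)
  let ?B = "{a..b}"
  let ?T = "collapse a b p y"
  show "finite K \<longleftrightarrow> finite (cphi a b p K)"
    unfolding cphi_def by (auto dest: finite_Diff2[of "{a..b}" K, THEN iffD1, rotated] simp del: finite_Diff2)
  have Tout: "?T k = y k" if "k \<notin> ?B" for k using that assms unfolding collapse_def by auto
  have Tin: "?T k = 0" if "k \<in> ?B" "k \<noteq> p" for k using that unfolding collapse_def by auto
  have Tp: "?T p = (\<Sum>j\<in>?B. y j)" unfolding collapse_def by simp
  have "(\<Sum>k\<in>K \<inter> {..<N}. ?T k) = (\<Sum>k\<in>cphi a b p K \<inter> {..<N}. y k)" if "N > b" for N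
  proof -
    have fin: "finite ((K - ?B) \<inter> {..<N})" by simp
    have e1: "(\<Sum>k\<in>(K - ?B) \<inter> {..<N}. ?T k) = (\<Sum>k\<in>(K - ?B) \<inter> {..<N}. y k)"
      using Tout by (intro sum.cong) auto
    show ?thesis
    proof (cases "p \<in> K")
      case True
      have u1: "K \<inter> {..<N} = ((K - ?B) \<inter> {..<N}) \<union> (K \<inter> ?B)" using that by auto
      have s1: "(\<Sum>k\<in>K \<inter> {..<N}. ?T k) = (\<Sum>k\<in>(K - ?B) \<inter> {..<N}. ?T k) + (\<Sum>k\<in>K \<inter> ?B. ?T k)"
        unfolding u1 by (rule sum.union_disjoint) auto
      have s2: "(\<Sum>k\<in>K \<inter> ?B. ?T k) = (\<Sum>k\<in>{p}. ?T k)"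
        using True assms Tin by (intro sum.mono_neutral_right) auto
      have u2: "cphi a b p K \<inter> {..<N} = ((K - ?B) \<inter> {..<N}) \<union> ?B"
        using True that unfolding cphi_def by auto
      have s3: "(\<Sum>k\<in>cphi a b p K \<inter> {..<N}. y k) = (\<Sum>k\<in>(K - ?B) \<inter> {..<N}. y k) + (\<Sum>k\<in>?B. y k)"
        unfolding u2 by (rule sum.union_disjoint) auto
      show ?thesis using s1 s2 s3 e1 Tp by simp
    next
      case False
      have u1: "K \<inter> {..<N} = ((K - ?B) \<inter> {..<N}) \<union> (K \<inter> ?B \<inter> {..<N})" by auto
      have s1: "(\<Sum>k\<in>K \<inter> {..<N}. ?T k) = (\<Sum>k\<in>(K - ?B) \<inter> {..<N}. ?T k) + (\<Sum>k\<in>K \<inter> ?B \<inter> {..<N}. ?T k)"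
        unfolding u1 by (rule sum.union_disjoint) auto
      have s2: "(\<Sum>k\<in>K \<inter> ?B \<inter> {..<N}. ?T k) = 0"
      proof (intro sum.neutral ballI)
        fix k assume "k \<in> K \<inter> ?B \<inter> {..<N}"
        then have "k \<in> ?B" "k \<noteq> p" using False by auto
        then show "?T k = 0" by (rule Tin)
      qed
      have u2: "cphi a b p K \<inter> {..<N} = (K - ?B) \<inter> {..<N}"
        using False unfolding cphi_def by auto
      show ?thesis using s1 s2 e1 u2 by simp
    qed
  qed
  then show "eventually (\<lambda>N. (\<Sum>k\<in>K \<inter> {..<N}. ?T k) = (\<Sum>k\<in>cphi a b p K \<inter> {..<N}. y k)) sequentially"
    unfolding eventually_sequentially by (intro exI[of _ "Suc b"]) auto
qed


lemma cphi_interval: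
  assumes "a \<le> p" "p \<le> b" "nat_interval K" "cphi a b p K \<noteq> {}"
  shows "nat_interval (cphi a b p K)"
proof (cases "p \<in> K")
  case True
  then have eq: "cphi a b p K = K \<union> {a..b}" unfolding cphi_def by simp
  show ?thesis unfolding eq
  proof (rule nat_intervalI)
    show "K \<union> {a..b} \<noteq> {}" using True by auto
    fix x z w assume x: "x \<in> K \<union> {a..b}" and w: "w \<in> K \<union> {a..b}" and xz: "x \<le> z" and zw: "z \<le> w"
    show "z \<in> K \<union> {a..b}"
    proof (cases "z < a")
      case True
      then have "x \<in> K" using x xz by auto
      then have "z \<in> K" using interval_mem[OF assms(3) _ \<open>p \<in> K\<close> xz] True assms by simp
      then show ?thesis by simp
    next
      case za: False
      show ?thesis
      proof (cases "z > b")
        case True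
        then have "w \<in> K" using w zw by auto
        then have "z \<in> K" using interval_mem[OF assms(3) \<open>p \<in> K\<close> _ _ zw] True assms by simp
        then show ?thesis by simp
      next
        case False
        then show ?thesis using za by simp
      qed
    qed
  qed
next
  case False
  then have eq: "cphi a b p K = K - {a..b}" unfolding cphi_def by simp
  show ?thesis unfolding eq
  proof (rule nat_intervalI)
    show "K - {a..b} \<noteq> {}" using assms(4) eq by simp
    fix x z w assume x: "x \<in> K - {a..b}" and w: "w \<in> K - {a..b}" and xz: "x \<le> z" and zw: "z \<le> w"
    have zK: "z \<in> K" using interval_mem[OF assms(3) _ _ xz zw] x w by simp
    show "z \<in> K - {a..b}"
    proof (rule ccontr)
      assume "z \<notin> K - {a..b}"
      then have zB: "a \<le> z" "z \<le> b" using zK by auto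
      then have "x < a" using x xz by auto
      moreover have "w > b" using w zw zB by auto
      moreover have "x \<in> K" "w \<in> K" using x w by auto
      ultimately have "p \<in> K" using interval_mem[OF assms(3), of x w p] assms(1,2) by simp
      then show False using False by simp
    qed
  qed
qed

lemma cphi_disj:
  assumes "K1 \<inter> K2 = {}"
  shows "cphi a b p K1 \<inter> cphi a b p K2 = {}"
  using assms unfolding cphi_def by auto

lemma collapse_jnorm:
  assumes "a \<le> p" "p \<le> b"
  shows "jnorm (collapse a b p y) \<le> jnorm y"
proof (rule jnorm_least)
  fix S assume S: "fam S"
  let ?phi = "cphi a b p"
  define S2 where "S2 = {K \<in> S. ?phi K \<noteq> {}}"
  have dis: "K1 \<inter> K2 = {}" if "K1 \<in> S" "K2 \<in> S" "K1 \<noteq> K2" for K1 K2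
    using S that unfolding pairwise_def disjnt_def by blast
  have inj: "inj_on ?phi S2"
  proof (rule inj_onI, rule ccontr)
    fix K1 K2 assume "K1 \<in> S2" "K2 \<in> S2" "?phi K1 = ?phi K2" "K1 \<noteq> K2"
    then show False using cphi_disj[OF dis, of K1 K2 a b p] unfolding S2_def by auto
  qed
  have fam2: "fam (?phi ` S2)"
  proof (intro conjI)
    show "finite (?phi ` S2)" using S unfolding S2_def by simp
    show "\<forall>I\<in>?phi ` S2. nat_interval I" using S cphi_interval[OF assms] unfolding S2_def by auto
    show "disjoint (?phi ` S2)"
    proof (rule pairwiseI)
      fix A B assume "A \<in> ?phi ` S2" "B \<in> ?phi ` S2" "A \<noteq> B"
      then obtain K1 K2 where "K1 \<in> S" "K2 \<in> S" "A = ?phi K1" "B = ?phi K2" "K1 \<noteq> K2"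
        unfolding S2_def by blast
      then show "disjnt A B" using cphi_disj[OF dis, of K1 K2 a b p] unfolding disjnt_def by simp
    qed
  qed
  have "(\<Sum>I\<in>S. (isum (collapse a b p y) I)\<^sup>2) = (\<Sum>I\<in>S. (isum y (?phi I))\<^sup>2)"
    using collapse_isum[OF assms] by simp
  also have "\<dots> = (\<Sum>I\<in>S2. (isum y (?phi I))\<^sup>2)"
  proof (rule sum.mono_neutral_right)
    show "finite S" using S by simp
    show "S2 \<subseteq> S" unfolding S2_def by auto
    show "\<forall>i\<in>S - S2. (isum y (?phi i))\<^sup>2 = 0" unfolding S2_def isum_def by auto
  qed
  also have "\<dots> = (\<Sum>I\<in>?phi ` S2. (isum y I)\<^sup>2)"
    using sum.reindex[OF inj, of "\<lambda>I. (isum y I)\<^sup>2"] by simp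
  finally show "ereal (sqrt (\<Sum>I\<in>S. (isum (collapse a b p y) I)\<^sup>2)) \<le> jnorm y"
    using jnorm_upper[OF fam2, of y] by simp
qed

definition delta :: "nat \<Rightarrow> real \<Rightarrow> nat \<Rightarrow> real" where
  "delta j c = (\<lambda>k. if k = j then c else 0)"

lemma delta_isum: "isum (delta j c) K = (if j \<in> K then c else 0)"
proof -
  have "isum (delta j c) K = (\<Sum>k\<in>K \<inter> {j}. delta j c k)"
    by (rule isum_supp) (auto simp: delta_def)
  then show ?thesis by (cases "j \<in> K") (auto simp: delta_def)
qed

lemma delta_jnorm: "jnorm (delta j c) \<le> ereal \<bar>c\<bar>"
proof (rule jnorm_least)
  fix S assume S: "fam S"
  have fin: "finite S" using S by simp
  have "(\<Sum>I\<in>S. (isum (delta j c) I)\<^sup>2) = (\<Sum>I\<in>S. if j \<in> I then c\<^sup>2 else 0)"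
    by (intro sum.cong) (auto simp: delta_isum)
  also have "\<dots> = (\<Sum>I\<in>{I \<in> S. j \<in> I}. c\<^sup>2)"
    using sum.inter_filter[OF fin, of "\<lambda>_. c\<^sup>2" "\<lambda>I. j \<in> I"] by simp
  also have "\<dots> = real (card {I \<in> S. j \<in> I}) * c\<^sup>2" by simp
  also have "\<dots> \<le> 1 * c\<^sup>2"
  proof (rule mult_right_mono)
    have "card {I \<in> S. j \<in> I} \<le> Suc 0"
    proof (subst card_le_Suc0_iff_eq)
      show "finite {I \<in> S. j \<in> I}" using fin by simp
      show "\<forall>a1\<in>{I \<in> S. j \<in> I}. \<forall>a2\<in>{I \<in> S. j \<in> I}. a1 = a2"
        using S unfolding pairwise_def disjnt_def by blast
    qed
    then show "real (card {I \<in> S. j \<in> I}) \<le> 1" by simp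
  qed simp
  finally have "(\<Sum>I\<in>S. (isum (delta j c) I)\<^sup>2) \<le> c\<^sup>2" by simp
  then have "sqrt (\<Sum>I\<in>S. (isum (delta j c) I)\<^sup>2) \<le> \<bar>c\<bar>"
    using real_sqrt_le_mono by fastforce
  then show "ereal (sqrt (\<Sum>I\<in>S. (isum (delta j c) I)\<^sup>2)) \<le> ereal \<bar>c\<bar>" by simp
qed

lemma delta_James: "delta j c \<in> James"
  unfolding James_def using delta_jnorm[of j c] le_less_trans[of _ "ereal \<bar>c\<bar>" \<infinity>] by simp

lemma not_extreme_same_sign:
  assumes nm: "n < m" and pos: "x n * x m > 0" and zero: "\<And>k. n < k \<Longrightarrow> k < m \<Longrightarrow> x k = 0"
    and xB: "x \<in> ball_J"
  shows "\<not> extreme_pt ball_J x"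
proof
  assume ext: "extreme_pt ball_J x"
  define u where "u = collapse n m n x"
  define v where "v = collapse n m m x"
  have sum_nm: "(\<Sum>j\<in>{n..m}. x j) = x n + x m"
  proof -
    have "(\<Sum>j\<in>{n..m}. x j) = (\<Sum>j\<in>{n, m}. x j)"
      using nm zero by (intro sum.mono_neutral_right) auto
    then show ?thesis using nm by simp
  qed
  have uB: "u \<in> ball_J" using collapse_jnorm[of n n m x] nm xB unfolding u_def ball_J_def by auto
  have vB: "v \<in> ball_J" using collapse_jnorm[of n m m x] nm xB unfolding v_def ball_J_def by auto
  have ne: "x n + x m \<noteq> 0"
  proof
    assume "x n + x m = 0"
    then have "x m = - x n" by simp
    then show False using pos not_square_less_zero[of "x n"] by simp
  qed
  define t where "t = x n / (x n + x m)"
  have t01: "0 < t \<and> t < 1"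
  proof (cases "x n > 0")
    case True
    then have "x m > 0" using pos by (simp add: zero_less_mult_iff)
    then show ?thesis using True unfolding t_def by (simp add: field_simps)
  next
    case False
    then have "x n < 0" using pos by (cases "x n = 0") auto
    then have "x m < 0" using pos by (simp add: zero_less_mult_iff)
    then show ?thesis using \<open>x n < 0\<close> unfolding t_def by (simp add: field_simps)
  qed
  have comb: "x = (\<lambda>k. t * u k + (1 - t) * v k)"
  proof
    fix k
    show "x k = t * u k + (1 - t) * v k"
    proof (cases "k = n")
      case True
      then show ?thesis using nm ne unfolding u_def v_def collapse_def sum_nm t_def
        by (simp add: field_simps)
    next
      case kn: False
      show ?thesis
      proof (cases "k = m")
        case True
        then show ?thesis using nm ne kn unfolding u_def v_def collapse_def sum_nm t_def
          by (simp add: field_simps)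
      next
        case False
        then show ?thesis using kn zero[of k] unfolding u_def v_def collapse_def by (auto simp: algebra_simps)
      qed
    qed
  qed
  have all: "\<forall>y\<in>ball_J. \<forall>z\<in>ball_J. \<forall>t::real. 0 < t \<and> t < 1 \<and> x = (\<lambda>n. t * y n + (1 - t) * z n) \<longrightarrow> y = z"
    using ext unfolding extreme_pt_def by (rule conjunct2)
  have "u = v" using all[rule_format, OF uB vB, of t] t01 comb by blast
  moreover have "u n \<noteq> v n" using nm ne unfolding u_def v_def collapse_def sum_nm by simp
  ultimately show False by simp
qed

lemma collapse_add: "collapse a b p (\<lambda>n. y n + z n) = (\<lambda>n. collapse a b p y n + collapse a b p z n)"
  unfolding collapse_def by (auto simp: sum.distrib)

lemma collapse_scale: "collapse a b p (\<lambda>n. c * y n) = (\<lambda>n. c * collapse a b p y n)"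
  unfolding collapse_def by (auto simp: sum_distrib_left)

lemma collapse_James:
  assumes "a \<le> p" "p \<le> b" "y \<in> James"
  shows "collapse a b p y \<in> James"
  using collapse_jnorm[OF assms(1,2), of y] assms(3) unfolding James_def by auto

lemma ball_Jdual_collapse:
  assumes f: "f \<in> ball_Jdual" and ab: "a \<le> p" "p \<le> b"
  shows "(\<lambda>y. if y \<in> James then f (collapse a b p y) else 0) \<in> ball_Jdual"
proof -
  let ?g = "\<lambda>y. if y \<in> James then f (collapse a b p y) else 0"
  have fadd: "\<And>x y. x \<in> James \<Longrightarrow> y \<in> James \<Longrightarrow> f (\<lambda>n. x n + y n) = f x + f y"
    and fsc: "\<And>c x. x \<in> James \<Longrightarrow> f (\<lambda>n. c * x n) = c * f x"
    and fb: "\<And>x. x \<in> James \<Longrightarrow> ereal \<bar>f x\<bar> \<le> jnorm x"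
    using f unfolding ball_Jdual_def by auto
  have "\<forall>x\<in>James. \<forall>y\<in>James. ?g (\<lambda>n. x n + y n) = ?g x + ?g y"
  proof (intro ballI)
    fix x y assume x: "x \<in> James" and y: "y \<in> James"
    have "(\<lambda>n. x n + y n) \<in> James" using James_add[OF x y] .
    then show "?g (\<lambda>n. x n + y n) = ?g x + ?g y"
      using x y fadd[OF collapse_James[OF ab x] collapse_James[OF ab y]] by (simp add: collapse_add)
  qed
  moreover have "\<forall>c. \<forall>x\<in>James. ?g (\<lambda>n. c * x n) = c * ?g x"
  proof (intro allI ballI)
    fix c x assume x: "x \<in> James"
    have "(\<lambda>n. c * x n) \<in> James" using James_scale[OF x] .
    then show "?g (\<lambda>n. c * x n) = c * ?g x"
      using x fsc[OF collapse_James[OF ab x]] by (simp add: collapse_scale)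
  qed
  moreover have "\<forall>x\<in>James. ereal \<bar>?g x\<bar> \<le> jnorm x"
  proof
    fix x assume x: "x \<in> James"
    have "ereal \<bar>f (collapse a b p x)\<bar> \<le> jnorm (collapse a b p x)" using fb[OF collapse_James[OF ab x]] .
    also have "\<dots> \<le> jnorm x" using collapse_jnorm[OF ab] .
    finally show "ereal \<bar>?g x\<bar> \<le> jnorm x" using x by simp
  qed
  ultimately show ?thesis unfolding ball_Jdual_def by simp
qed

lemma functional_shift:
  assumes f: "interval_functional F \<alpha> I \<in> ball_Jdual"
    and FU: "finite F \<or> F = UNIV" and r: "r \<in> F" and ab: "a \<le> p" "p \<le> b"
    and inter: "\<And>k. k \<in> F \<Longrightarrow> \<alpha> k \<noteq> 0 \<Longrightarrow> I k \<inter> {a..b} = (if k = r then {p} else {})"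
    and y: "y \<in> James"
  shows "interval_functional F \<alpha> I (collapse a b p y)
          = interval_functional F \<alpha> I y + \<alpha> r * ((\<Sum>j\<in>{a..b}. y j) - y p)"
proof -
  let ?f = "interval_functional F \<alpha> I"
  let ?c = "(\<Sum>j\<in>{a..b}. y j) - y p"
  have fadd: "\<And>x y. x \<in> James \<Longrightarrow> y \<in> James \<Longrightarrow> ?f (\<lambda>n. x n + y n) = ?f x + ?f y"
    using f unfolding ball_Jdual_def by auto
  define w where "w = (\<lambda>k. collapse a b p y k + (-1) * y k)"
  have wJ: "w \<in> James" unfolding w_def
    using James_add[OF collapse_James[OF ab y] James_scale[OF y]] .
  have eq: "collapse a b p y = (\<lambda>k. y k + w k)" unfolding w_def by auto
  have wout: "w k = 0" if "k \<notin> {a..b}" for k using that ab unfolding w_def collapse_def by auto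
  have wp: "w p = ?c" using ab unfolding w_def collapse_def by simp
  have tm: "\<alpha> k * isum w (I k) = (if k = r then \<alpha> r * ?c else 0)" if "k \<in> F" for k
  proof (cases "\<alpha> k = 0")
    case True
    then show ?thesis by auto
  next
    case False
    have "isum w (I k) = (\<Sum>j\<in>I k \<inter> {a..b}. w j)" by (rule isum_supp) (auto simp: wout)
    also have "\<dots> = (if k = r then ?c else 0)" using inter[OF that False] wp by simp
    finally show ?thesis by simp
  qed
  have fw: "?f w = \<alpha> r * ?c"
  proof (cases "finite F")
    case True
    have "?f w = (\<Sum>k\<in>F. \<alpha> k * isum w (I k))" using True wJ unfolding interval_functional_def by simp
    also have "\<dots> = (\<Sum>k\<in>F. if k = r then \<alpha> r * ?c else 0)" using tm by (intro sum.cong) auto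
    also have "\<dots> = \<alpha> r * ?c" using True r by simp
    finally show ?thesis .
  next
    case False
    then have FU: "F = UNIV" using FU by simp
    have "?f w = (\<Sum>k. \<alpha> k * isum w (I k))" using False wJ unfolding interval_functional_def by simp
    also have "\<dots> = (\<Sum>k. if k = r then \<alpha> r * ?c else 0)" using tm FU by simp
    also have "\<dots> = \<alpha> r * ?c" using sums_single[of r "\<lambda>_. \<alpha> r * ?c"] by (simp add: sums_iff)
    finally show ?thesis .
  qed
  show ?thesis unfolding eq using fadd[OF y wJ] fw by simp
qed

theorem proposition5p4:
  fixes F :: "nat set" and \<alpha> :: "nat \<Rightarrow> real" and I :: "nat \<Rightarrow> nat set"
    and x :: "nat \<Rightarrow> real"
  assumes F: "(\<exists>k. F = {..<k}) \<or> F = UNIV"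
    and x_def: "x = (\<lambda>n. if n \<in> F then \<alpha> n else 0)"
    and ext: "extreme_pt ball_J x"
    and intv: "\<forall>n\<in>F. nat_interval (I n)"
    and ord: "\<forall>n. n \<in> F \<and> Suc n \<in> F \<longrightarrow> (\<forall>a\<in>I n. \<forall>b\<in>I (Suc n). a < b)"
    and notint: "\<not> nat_interval (\<Union>n\<in>supp x. I n)"
  shows "\<not> extreme_pt ball_Jdual (interval_functional F \<alpha> I)"
proof
  assume extd: "extreme_pt ball_Jdual (interval_functional F \<alpha> I)"
  let ?f = "interval_functional F \<alpha> I"
  have Fdown: "k \<in> F" if "j \<in> F" "k \<le> j" for k j using F that by auto
  have FU: "finite F \<or> F = UNIV" using F by auto
  have xF: "x k = \<alpha> k" if "k \<in> F" for k using that x_def by simp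
  have suppF: "k \<in> F" if "k \<in> supp x" for k using that x_def unfolding supp_def by (cases "k \<in> F") auto
  have xB: "x \<in> ball_J" using ext unfolding extreme_pt_def by simp
  have allx: "\<forall>y\<in>ball_J. \<forall>z\<in>ball_J. \<forall>t::real. 0 < t \<and> t < 1 \<and> x = (\<lambda>n. t * y n + (1 - t) * z n) \<longrightarrow> y = z"
    using ext unfolding extreme_pt_def by (rule conjunct2)
  have neI: "I k \<noteq> {}" if "k \<in> F" for k using intv that unfolding nat_interval_def by blast
  have ordlt: "\<forall>a\<in>I i. \<forall>c\<in>I j. a < c" if "i < j" "j \<in> F" for i j
    using that
  proof (induction j)
    case 0 then show ?case by simp
  next
    case (Suc j)
    have jF: "j \<in> F" using Fdown[OF Suc.prems(2)] by simp
    have step: "\<forall>a\<in>I j. \<forall>c\<in>I (Suc j). a < c" using ord jF Suc.prems(2) by blast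
    show ?case
    proof (cases "i = j")
      case True then show ?thesis using step by simp
    next
      case False
      then have "i < j" using Suc.prems by simp
      then have IH: "\<forall>a\<in>I i. \<forall>c\<in>I j. a < c" using Suc.IH jF by simp
      obtain c0 where "c0 \<in> I j" using neI[OF jF] by blast
      then show ?thesis using IH step by (meson less_trans)
    qed
  qed
  show False
  proof (cases "supp x = {}")
    case True
    then have x0: "x = (\<lambda>n. 0)" unfolding supp_def by auto
    have d1: "delta 0 1 \<in> ball_J" using delta_jnorm[of 0 1] unfolding ball_J_def by (simp add: one_ereal_def)
    have d2: "delta 0 (-1) \<in> ball_J" using delta_jnorm[of 0 "-1"] unfolding ball_J_def by (simp add: one_ereal_def)
    have "x = (\<lambda>n. (1/2) * delta 0 1 n + (1 - 1/2) * delta 0 (-1) n)"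
      unfolding x0 delta_def by auto
    then have "delta 0 1 = delta 0 (-1)" using allx[rule_format, OF d1 d2, of "1/2"] by simp
    then have "delta 0 1 0 = delta 0 (-1) 0" by simp
    then show False unfolding delta_def by simp
  next
    case False
    let ?U = "\<Union>n\<in>supp x. I n"
    obtain k0 where k0: "k0 \<in> supp x" using False by blast
    have Une: "?U \<noteq> {}" using neI[OF suppF[OF k0]] k0 by blast
    have "\<not> (\<forall>a\<in>?U. \<forall>c\<in>?U. \<forall>b. a \<le> b \<and> b \<le> c \<longrightarrow> b \<in> ?U)"
      using notint Une unfolding nat_interval_def by blast
    then obtain a c bb where a: "a \<in> ?U" and c: "c \<in> ?U" and abc: "a \<le> bb" "bb \<le> c" and bbU: "bb \<notin> ?U"
      by blast
    obtain i where i: "i \<in> supp x" "a \<in> I i" using a by blast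
    obtain j where j: "j \<in> supp x" "c \<in> I j" using c by blast
    have bbI: "bb \<notin> I k" if "k \<in> supp x" for k using bbU that by blast
    have abb: "a < bb" using abc bbI[OF i(1)] i(2) by (cases "a = bb") auto
    have bbc: "bb < c" using abc bbI[OF j(1)] j(2) by (cases "c = bb") auto
    define Sset where "Sset = {k \<in> supp x. \<exists>e\<in>I k. e < bb}"
    have Sset_lt: "k < j" if kS: "k \<in> Sset" for k
    proof (rule ccontr)
      assume "\<not> k < j"
      obtain e where e: "e \<in> I k" "e < bb" "k \<in> supp x" using kS unfolding Sset_def by blast
      show False
      proof (cases "k = j")
        case True
        then have "bb \<in> I j" using interval_mem[of "I j" e c bb] intv suppF[OF j(1)] e j(2) abc by auto
        then show False using bbI[OF j(1)] by simp
      next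
        case False
        then have "j < k" using \<open>\<not> k < j\<close> by simp
        then have "c < e" using ordlt[of j k] suppF[OF e(3)] j(2) e(1) by blast
        then show False using e(2) abc by simp
      qed
    qed
    have finS: "finite Sset" using Sset_lt by (meson finite_lessThan finite_subset lessThan_iff subsetI)
    have iS: "i \<in> Sset" unfolding Sset_def using i abb by blast
    define n where "n = Max Sset"
    have nS: "n \<in> Sset" unfolding n_def using finS iS Max_in by blast
    have n_max: "k \<le> n" if "k \<in> Sset" for k unfolding n_def using finS that by simp
    have nsupp: "n \<in> supp x" using nS unfolding Sset_def by simp
    have nj: "n < j" using Sset_lt[OF nS] .
    have In_lt: "e < bb" if eI: "e \<in> I n" for e
    proof (rule ccontr)
      assume "\<not> e < bb"
      obtain e0 where "e0 \<in> I n" "e0 < bb" using nS unfolding Sset_def by blast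
      then have "bb \<in> I n" using interval_mem[of "I n" e0 e bb] intv suppF[OF nsupp] eI \<open>\<not> e < bb\<close> by auto
      then show False using bbI[OF nsupp] by simp
    qed
    define m where "m = (LEAST k. k \<in> supp x \<and> n < k)"
    have "j \<in> supp x \<and> n < j" using j nj by simp
    then have mprop: "m \<in> supp x \<and> n < m" unfolding m_def by (rule LeastI)
    have mmin: "m \<le> k" if "k \<in> supp x" "n < k" for k unfolding m_def using that by (simp add: Least_le)
    have Im_gt: "bb < e" if eIm: "e \<in> I m" for e
    proof (rule ccontr)
      assume "\<not> bb < e"
      show False
      proof (cases "e = bb")
        case True then show False using bbI mprop eIm by blast
      next
        case False
        then have "e < bb" using \<open>\<not> bb < e\<close> by simp
        then have "m \<in> Sset" unfolding Sset_def using mprop \<open>e \<in> I m\<close> by blast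
        then show False using n_max mprop by fastforce
      qed
    qed
    have nF: "n \<in> F" and mF: "m \<in> F" using suppF nsupp mprop by auto
    have finIn: "finite (I n)" using In_lt by (meson finite_lessThan finite_subset lessThan_iff subsetI)
    define P where "P = Max (I n)"
    have PI: "P \<in> I n" unfolding P_def using finIn neI[OF nF] Max_in by blast
    have Pmax: "e \<le> P" if "e \<in> I n" for e unfolding P_def using finIn that by simp
    have Pbb: "P < bb" using In_lt[OF PI] .
    define Q where "Q = (LEAST e. e \<in> I m)"
    have QI: "Q \<in> I m" unfolding Q_def using neI[OF mF] by (metis LeastI ex_in_conv)
    have Qmin: "Q \<le> e" if "e \<in> I m" for e unfolding Q_def using that by (simp add: Least_le)
    have Qbb: "bb < Q" using Im_gt[OF QI] .
    have zeros: "x k = 0" if "n < k" "k < m" for k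
    proof (rule ccontr)
      assume "x k \<noteq> 0"
      then have "k \<in> supp x" unfolding supp_def by simp
      then show False using mmin[of k] that by simp
    qed
    have xn: "x n \<noteq> 0" and xm: "x m \<noteq> 0" using nsupp mprop unfolding supp_def by auto
    have "\<not> x n * x m > 0" using not_extreme_same_sign[of n m x] mprop zeros xB ext by blast
    then have neg: "\<alpha> n * \<alpha> m < 0" using xn xm xF[OF nF] xF[OF mF]
      by (metis linorder_neqE_linordered_idom mult_eq_0_iff)
    have loc: "(k < n \<and> e < P) \<or> (k = n \<and> e \<le> P) \<or> (k = m \<and> Q \<le> e) \<or> (m < k \<and> Q < e)"
      if ks0: "k \<in> supp x" and eIk: "e \<in> I k" for k e
    proof -
      have kF: "k \<in> F" using suppF ks0 .
      consider "k < n" | "k = n" | "n < k \<and> k = m" | "m < k"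
        using mmin[OF ks0] by (cases "k < n"; cases "k = n"; cases "k = m") auto
      then show ?thesis
      proof cases
        case 1 then show ?thesis using ordlt[OF _ nF, of k] eIk PI by blast
      next
        case 2 then show ?thesis using Pmax eIk by blast
      next
        case 3 then show ?thesis using Qmin eIk by blast
      next
        case 4 then show ?thesis using ordlt[OF _ kF, of m] eIk QI by blast
      qed
    qed
    have suppk: "k \<in> supp x" if "k \<in> F" "\<alpha> k \<noteq> 0" for k using that xF unfolding supp_def by simp
    have inter1: "I k \<inter> {P..Q-1} = (if k = n then {P} else {})" if "k \<in> F" "\<alpha> k \<noteq> 0" for k
    proof -
      have ks: "k \<in> supp x" using suppk that .
      show ?thesis
      proof (cases "k = n")
        case True
        then show ?thesis using PI Pmax Pbb Qbb by fastforce
      next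
        case False
        have "e \<notin> {P..Q-1}" if "e \<in> I k" for e using loc[OF ks that] False mprop Pbb Qbb by auto
        then show ?thesis using False by auto
      qed
    qed
    have inter2: "I k \<inter> {Suc P..Q} = (if k = m then {Q} else {})" if "k \<in> F" "\<alpha> k \<noteq> 0" for k
    proof -
      have ks: "k \<in> supp x" using suppk that .
      show ?thesis
      proof (cases "k = m")
        case True
        then show ?thesis using QI Qmin Pbb Qbb by fastforce
      next
        case False
        have "e \<notin> {Suc P..Q}" if "e \<in> I k" for e using loc[OF ks that] False mprop Pbb Qbb by auto
        then show ?thesis using False by auto
      qed
    qed
    have fd: "?f \<in> ball_Jdual" using extd unfolding extreme_pt_def by simp
    have alld: "\<forall>y\<in>ball_Jdual. \<forall>z\<in>ball_Jdual. \<forall>t::real. 0 < t \<and> t < 1 \<and> ?f = (\<lambda>n. t * y n + (1 - t) * z n) \<longrightarrow> y = z"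
      using extd unfolding extreme_pt_def by (rule conjunct2)
    have fvan: "?f y = 0" if "y \<notin> James" for y using fd that unfolding ball_Jdual_def by blast
    have PQ1: "P \<le> Q - 1" using Pbb Qbb by simp
    have PQ2: "Suc P \<le> Q" using Pbb Qbb by simp
    define f1 where "f1 = (\<lambda>y. if y \<in> James then ?f (collapse P (Q-1) P y) else 0)"
    define f2 where "f2 = (\<lambda>y. if y \<in> James then ?f (collapse (Suc P) Q Q y) else 0)"
    have f1B: "f1 \<in> ball_Jdual" unfolding f1_def using ball_Jdual_collapse[OF fd order_refl PQ1] .
    have f2B: "f2 \<in> ball_Jdual" unfolding f2_def using ball_Jdual_collapse[OF fd PQ2 order_refl] .
    define G :: "(nat \<Rightarrow> real) \<Rightarrow> real" where "G = (\<lambda>y. \<Sum>k\<in>{Suc P..Q-1}. y k)"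
    have f1eq: "f1 y = ?f y + \<alpha> n * G y" if "y \<in> James" for y
    proof -
      have "?f (collapse P (Q-1) P y) = ?f y + \<alpha> n * ((\<Sum>j\<in>{P..Q-1}. y j) - y P)"
        by (rule functional_shift[OF fd FU nF order_refl PQ1 inter1 that])
      moreover have "(\<Sum>j\<in>{P..Q-1}. y j) = y P + G y"
        unfolding G_def using sum.atLeast_Suc_atMost[OF PQ1] .
      ultimately show ?thesis unfolding f1_def using that by simp
    qed
    have f2eq: "f2 y = ?f y + \<alpha> m * G y" if "y \<in> James" for y
    proof -
      have "?f (collapse (Suc P) Q Q y) = ?f y + \<alpha> m * ((\<Sum>j\<in>{Suc P..Q}. y j) - y Q)"
        by (rule functional_shift[OF fd FU mF PQ2 order_refl inter2 that])
      moreover have "(\<Sum>j\<in>{Suc P..Q}. y j) = G y + y Q"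
      proof -
        obtain Q' where Qs: "Q = Suc Q'" using Qbb by (cases Q) auto
        show ?thesis unfolding G_def Qs using PQ2 Qs by simp
      qed
      ultimately show ?thesis unfolding f2_def using that by simp
    qed
    have dne: "\<alpha> m - \<alpha> n \<noteq> 0" using neg by auto
    define t where "t = \<alpha> m / (\<alpha> m - \<alpha> n)"
    have t01: "0 < t \<and> t < 1"
    proof (cases "\<alpha> n < 0")
      case True
      then have "\<alpha> m > 0" using neg by (simp add: mult_less_0_iff)
      then show ?thesis using True unfolding t_def by (simp add: field_simps)
    next
      case False
      then have "\<alpha> n > 0" using neg by (cases "\<alpha> n = 0") auto
      then have "\<alpha> m < 0" using neg by (simp add: mult_less_0_iff)
      then show ?thesis using \<open>\<alpha> n > 0\<close> unfolding t_def by (simp add: field_simps)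
    qed
    have tz: "t * \<alpha> n + (1 - t) * \<alpha> m = 0" unfolding t_def using dne by (simp add: field_simps)
    have comb: "?f = (\<lambda>y. t * f1 y + (1 - t) * f2 y)"
    proof
      fix y
      show "?f y = t * f1 y + (1 - t) * f2 y"
      proof (cases "y \<in> James")
        case True
        have "t * f1 y + (1 - t) * f2 y = ?f y + (t * \<alpha> n + (1 - t) * \<alpha> m) * G y"
          unfolding f1eq[OF True] f2eq[OF True] by (simp add: algebra_simps)
        then show ?thesis using tz by simp
      next
        case False
        then show ?thesis using fvan unfolding f1_def f2_def by simp
      qed
    qed
    have "f1 = f2" using alld f1B f2B t01 comb by blast
    moreover have "f1 (delta bb 1) \<noteq> f2 (delta bb 1)"
    proof -
      have "G (delta bb 1) = 1"
      proof -
        have "bb \<in> {Suc P..Q-1}" using Pbb Qbb by simp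
        then show ?thesis unfolding G_def delta_def by simp
      qed
      moreover have "\<alpha> n \<noteq> \<alpha> m" using dne by simp
      ultimately show ?thesis using f1eq[OF delta_James] f2eq[OF delta_James] by simp
    qed
    ultimately show False by simp
  qed
qed

end
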